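(* Consider $K$ arms with reward distributions supported on $[0,1]$, variances $\sigma_1^2,\dots,\sigma_K^2$, a unique arm $*$ of maximal variance $\sigma_*^2$, and gaps $\delta_i=\sigma_*^2-\sigma_i^2$. Run the sequential halving algorithm SHVV with budget $n$: starting from the set of all arms, in each round $r$ every arm in the current set $A_r$ is pulled $t_r=\frac{n}{|A_r|\log_2 K}$ times, the empirical (sample) variance $\bar V_i(t_r)=\frac{1}{t_r-1}\sum_{q=1}^{t_r}(X_{i,q}-\bar X_i(t_r))^2$ of these $t_r$ rewards is computed for each $i\in A_r$ ($\bar X_i(t_r)$ their mean), and the $\lceil |A_r|/2\rceil$ arms with largest empirical variance form $A_{r+1}$. Assume the best arm $*$ has not been eliminated prior to round $r$. Then for any arm $i\in A_r$, $$\mathbb{P}\big(\bar V_i(t_r)>\bar V_*(t_r)\big)\le \exp\Big(-\frac{(t_r-1)^2\delta_i^2}{2t_r}\Big).$$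
   Context: Rewards are independent across arms and pulls. *)

theory Defs
  imports "HOL-Probability.Probability"
begin

definition dist_var :: "real measure \<Rightarrow> real" where
  "dist_var D = (\<integral>x. (x - (\<integral>y. y \<partial>D))\<^sup>2 \<partial>D)"

definition sample_mean :: "nat \<Rightarrow> (nat \<Rightarrow> real) \<Rightarrow> real" where
  "sample_mean t x = (\<Sum>q=1..t. x q) / real t"

definition sample_var :: "nat \<Rightarrow> (nat \<Rightarrow> real) \<Rightarrow> real" where
  "sample_var t x = (1 / (real t - 1)) * (\<Sum>q=1..t. (x q - sample_mean t x)\<^sup>2)"

end

theory Submission imports Defs
begin


lemma (in prob_space) edge_mgf:
  assumes g[measurable]: "random_variable borel g" and bd: "AE \<omega> in M. g \<omega> \<in> {-1/2..1/2}"
    and ex: "expectation g = -\<delta>" and l: "l > 0"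
  shows "(\<integral>\<^sup>+\<omega>. ennreal (exp (l * g \<omega>)) \<partial>M) \<le> ennreal (exp (- l*\<delta> + l\<^sup>2/8))"
proof -
  interpret interval_bounded_random_variable M g "-1/2" "1/2"
    by unfold_locales (use bd in auto)
  have h: "(\<integral>\<^sup>+\<omega>. ennreal (exp (l * (g \<omega> - expectation g))) \<partial>M) \<le> ennreal (exp (l\<^sup>2 * (1/2 - -1/2)\<^sup>2 / 8))"
    by (rule Hoeffdings_lemma_nn_integral) (fact l)
  have "(\<integral>\<^sup>+\<omega>. ennreal (exp (l * g \<omega>)) \<partial>M) = (\<integral>\<^sup>+\<omega>. ennreal (exp (-l*\<delta>)) * ennreal (exp (l * (g \<omega> - expectation g))) \<partial>M)"
    by (intro nn_integral_cong) (simp add: ex flip: ennreal_mult exp_add, simp add: algebra_simps)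
  also have "\<dots> = ennreal (exp (-l*\<delta>)) * (\<integral>\<^sup>+\<omega>. ennreal (exp (l * (g \<omega> - expectation g))) \<partial>M)"
    by (rule nn_integral_cmult) measurable
  also have "\<dots> \<le> ennreal (exp (-l*\<delta>)) * ennreal (exp (l\<^sup>2 * (1/2 - -1/2)\<^sup>2 / 8))"
    by (intro mult_left_mono h) auto
  also have "\<dots> = ennreal (exp (- l*\<delta> + l\<^sup>2/8))"
    by (simp flip: ennreal_mult exp_add)
  finally show ?thesis .
qed

lemma (in prob_space) matching_mgf:
  assumes fin: "finite Mr" and ind: "indep_vars (\<lambda>_. borel) G Mr"
    and bd: "\<And>e. e \<in> Mr \<Longrightarrow> AE \<omega> in M. G e \<omega> \<in> {-1/2..1/2}"
    and ex: "\<And>e. e \<in> Mr \<Longrightarrow> expectation (G e) = -\<delta>" and l: "l > 0"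
  shows "(\<integral>\<^sup>+\<omega>. ennreal (exp (l * (\<Sum>e\<in>Mr. G e \<omega>))) \<partial>M) \<le> ennreal (exp (real (card Mr) * (- l*\<delta> + l\<^sup>2/8)))"
proof -
  have rv: "random_variable borel (G e)" if "e \<in> Mr" for e
    using ind that unfolding indep_vars_def by blast
  have "(\<integral>\<^sup>+\<omega>. ennreal (exp (l * (\<Sum>e\<in>Mr. G e \<omega>))) \<partial>M) = (\<integral>\<^sup>+\<omega>. (\<Prod>e\<in>Mr. ennreal (exp (l * G e \<omega>))) \<partial>M)"
    by (intro nn_integral_cong) (simp add: sum_distrib_left exp_sum fin prod_ennreal)
  also have "\<dots> = (\<Prod>e\<in>Mr. \<integral>\<^sup>+\<omega>. ennreal (exp (l * G e \<omega>)) \<partial>M)"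
    by (intro indep_vars_nn_integral fin indep_vars_compose2[OF ind]) auto
  also have "\<dots> \<le> (\<Prod>e\<in>Mr. ennreal (exp (- l*\<delta> + l\<^sup>2/8)))"
    by (intro prod_mono_ennreal edge_mgf rv bd ex l)
  also have "\<dots> = ennreal (exp (real (card Mr) * (- l*\<delta> + l\<^sup>2/8)))"
    by (simp add: ennreal_power exp_of_nat_mult)
  finally show ?thesis .
qed



lemma (in prob_space) matchings_tail:
  fixes G :: "'e \<Rightarrow> 'a \<Rightarrow> real" and Mt :: "'r \<Rightarrow> 'e set"
  assumes finR: "finite R" and finM: "\<And>r. r \<in> R \<Longrightarrow> finite (Mt r)"
    and disj: "disjoint_family_on Mt R"
    and ind: "\<And>r. r \<in> R \<Longrightarrow> indep_vars (\<lambda>_. borel) G (Mt r)"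
    and bd: "\<And>r e. r \<in> R \<Longrightarrow> e \<in> Mt r \<Longrightarrow> AE \<omega> in M. G e \<omega> \<in> {-1/2..1/2}"
    and ex: "\<And>r e. r \<in> R \<Longrightarrow> e \<in> Mt r \<Longrightarrow> expectation (G e) = -\<delta>"
    and d: "\<delta> > 0" and k0: "k0 > 0"
    and card: "\<And>r. r \<in> R \<Longrightarrow> Mt r \<noteq> {} \<Longrightarrow> real (card (Mt r)) \<ge> k0"
  shows "prob {\<omega>\<in>space M. 0 < (\<Sum>e\<in>\<Union>(Mt ` R). G e \<omega>)} \<le> exp (-2*k0*\<delta>\<^sup>2)"
proof -
  define R' where "R' = {r\<in>R. Mt r \<noteq> {}}"
  have finR': "finite R'" using finR by (simp add: R'_def)
  have R'R: "R' \<subseteq> R" by (auto simp: R'_def)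
  have U: "\<Union>(Mt ` R) = \<Union>(Mt ` R')" by (auto simp: R'_def)
  have rv: "random_variable borel (G e)" if "r \<in> R" "e \<in> Mt r" for r e
    using ind[OF that(1)] that(2) unfolding indep_vars_def by blast
  have disj': "disjoint_family_on Mt R'" using disj R'R by (rule disjoint_family_on_mono[rotated])
  have sumS: "(\<Sum>e\<in>\<Union>(Mt ` R). G e \<omega>) = (\<Sum>r\<in>R'. \<Sum>e\<in>Mt r. G e \<omega>)" for \<omega>
    unfolding U using finR' finM R'R disj'
    by (subst sum.UNION_disjoint) (auto simp: disjoint_family_on_def)
  show ?thesis
  proof (cases "R' = {}")
    case True
    then show ?thesis by (simp add: sumS)
  next
    case False
    define N where "N = (\<Sum>r\<in>R'. real (card (Mt r)))"
    have cpos: "real (card (Mt r)) > 0" if "r \<in> R'" for r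
      using that finM R'R by (auto simp: R'_def card_gt_0_iff)
    have Npos: "N > 0" unfolding N_def using False finR' cpos
      by (intro sum_pos) auto
    define lam where "lam = 4 * k0 * \<delta>"
    have lam: "lam > 0" using k0 d by (simp add: lam_def)
    define S where "S = (\<lambda>\<omega>. \<Sum>r\<in>R'. \<Sum>e\<in>Mt r. G e \<omega>)"
    have Smeas[measurable]: "S \<in> borel_measurable M"
      unfolding S_def using R'R by (intro borel_measurable_sum) (auto intro: rv)
    define a where "a = (\<lambda>r. real (card (Mt r)) / N)"
    define y where "y = (\<lambda>r \<omega>. (lam / real (card (Mt r))) * (\<Sum>e\<in>Mt r. G e \<omega>))"
    have pw: "exp ((lam / N) * S \<omega>) \<le> (\<Sum>r\<in>R'. a r * exp (y r \<omega>))" for \<omega>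
    proof -
      have "(\<Sum>r\<in>R'. a r *\<^sub>R y r \<omega>) = (lam / N) * S \<omega>"
      proof -
        have "(\<Sum>r\<in>R'. a r *\<^sub>R y r \<omega>) = (\<Sum>r\<in>R'. (lam / N) * (\<Sum>e\<in>Mt r. G e \<omega>))"
        proof (intro sum.cong refl)
          fix r assume "r \<in> R'"
          then have "real (card (Mt r)) > 0" by (rule cpos)
          then show "a r *\<^sub>R y r \<omega> = (lam / N) * (\<Sum>e\<in>Mt r. G e \<omega>)"
            unfolding a_def y_def by (simp add: field_simps del: sum_divide_distrib)
        qed
        then show ?thesis by (simp add: S_def sum_distrib_left)
      qed
      moreover have "exp (\<Sum>r\<in>R'. a r *\<^sub>R y r \<omega>) \<le> (\<Sum>r\<in>R'. a r * exp (y r \<omega>))"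
        by (rule convex_on_sum[OF finR' False exp_convex])
           (use Npos in \<open>auto simp: a_def N_def simp flip: sum_divide_distrib\<close>)
      ultimately show ?thesis by simp
    qed
    have "ennreal (prob {\<omega>\<in>space M. 0 < S \<omega>}) \<le> emeasure M {\<omega>\<in>space M. S \<omega> \<ge> 0}"
      proof -
      have "{\<omega>\<in>space M. S \<omega> \<ge> 0} \<in> events" by measurable
      then have "prob {\<omega>\<in>space M. 0 < S \<omega>} \<le> prob {\<omega>\<in>space M. S \<omega> \<ge> 0}"
        by (rule finite_measure_mono[rotated]) auto
      then show ?thesis by (simp add: emeasure_eq_measure)
    qed
    also have "\<dots> \<le> ennreal (exp (-(lam/N) * 0)) * (\<integral>\<^sup>+\<omega>. ennreal (exp ((lam/N) * S \<omega>)) * indicator (space M) \<omega> \<partial>M)"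
      apply (rule Chernoff_ineq_nn_integral_ge)
      using lam Npos apply simp
       apply simp
      apply measurable
      done
    also have "\<dots> = (\<integral>\<^sup>+\<omega>. ennreal (exp ((lam/N) * S \<omega>)) \<partial>M)"
      apply (simp only: mult_zero_right exp_zero ennreal_1 mult_1)
      by (rule nn_integral_cong) (simp add: indicator_def)
    also have "\<dots> \<le> (\<integral>\<^sup>+\<omega>. (\<Sum>r\<in>R'. ennreal (a r) * ennreal (exp (y r \<omega>))) \<partial>M)"
    proof (rule nn_integral_mono)
      fix \<omega>
      have ann: "a r \<ge> 0" for r using Npos by (simp add: a_def)
      have "ennreal (exp ((lam/N) * S \<omega>)) \<le> ennreal (\<Sum>r\<in>R'. a r * exp (y r \<omega>))"
        using pw by (rule ennreal_leI)
      also have "\<dots> = (\<Sum>r\<in>R'. ennreal (a r * exp (y r \<omega>)))"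
        by (rule sum_ennreal[symmetric]) (use ann in simp)
      also have "\<dots> = (\<Sum>r\<in>R'. ennreal (a r) * ennreal (exp (y r \<omega>)))"
        by (intro sum.cong refl) (use ann in \<open>simp add: ennreal_mult\<close>)
      finally show "ennreal (exp ((lam/N) * S \<omega>)) \<le> (\<Sum>r\<in>R'. ennreal (a r) * ennreal (exp (y r \<omega>)))" .
    qed
    also have "\<dots> = (\<Sum>r\<in>R'. ennreal (a r) * (\<integral>\<^sup>+\<omega>. ennreal (exp (y r \<omega>)) \<partial>M))"
    proof -
      have ym: "(\<lambda>\<omega>. ennreal (exp (y r \<omega>))) \<in> borel_measurable M" if "r \<in> R'" for r
      proof -
        have "(\<lambda>\<omega>. (\<Sum>e\<in>Mt r. G e \<omega>)) \<in> borel_measurable M"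
          using that R'R by (intro borel_measurable_sum) (auto intro: rv)
        then show ?thesis unfolding y_def by measurable
      qed
      have "(\<integral>\<^sup>+\<omega>. (\<Sum>r\<in>R'. ennreal (a r) * ennreal (exp (y r \<omega>))) \<partial>M)
          = (\<Sum>r\<in>R'. (\<integral>\<^sup>+\<omega>. ennreal (a r) * ennreal (exp (y r \<omega>)) \<partial>M))"
        by (rule nn_integral_sum) (use ym in measurable)
      also have "\<dots> = (\<Sum>r\<in>R'. ennreal (a r) * (\<integral>\<^sup>+\<omega>. ennreal (exp (y r \<omega>)) \<partial>M))"
        by (intro sum.cong refl nn_integral_cmult ym)
      finally show ?thesis .
    qed
    also have "\<dots> \<le> (\<Sum>r\<in>R'. ennreal (a r) * ennreal (exp (-2*k0*\<delta>\<^sup>2)))"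
    proof (intro sum_mono mult_left_mono)
      fix r assume r: "r \<in> R'"
      define c where "c = real (card (Mt r))"
      have c: "c > 0" "c \<ge> k0" using cpos r card R'R by (auto simp: c_def R'_def)
      have "c * (- (lam/c)*\<delta> + (lam/c)\<^sup>2/8) = -lam*\<delta> + lam\<^sup>2/(8*c)"
        using c by (simp add: field_simps power2_eq_square)
      also have "\<dots> \<le> -lam*\<delta> + lam\<^sup>2/(8*k0)"
        using c k0 lam by (intro add_left_mono divide_left_mono) auto
      also have "\<dots> = -2*k0*\<delta>\<^sup>2"
        using k0 by (simp add: lam_def field_simps power2_eq_square)
      finally have ineq: "c * (- (lam/c)*\<delta> + (lam/c)\<^sup>2/8) \<le> -2*k0*\<delta>\<^sup>2" .
      have "(\<integral>\<^sup>+\<omega>. ennreal (exp (y r \<omega>)) \<partial>M) \<le> ennreal (exp (c * (- (lam/c)*\<delta> + (lam/c)\<^sup>2/8)))"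
      proof -
        have rR: "r \<in> R" using r R'R by auto
        have "lam / real (card (Mt r)) > 0" using c lam by (simp add: c_def)
        note XX = matching_mgf[OF finM[OF rR] ind[OF rR] bd[OF rR] ex[OF rR] this]
        show ?thesis unfolding y_def c_def by (rule XX)
      qed
      also have "\<dots> \<le> ennreal (exp (-2*k0*\<delta>\<^sup>2))"
        using ineq by (intro ennreal_leI) simp
      finally show "(\<integral>\<^sup>+\<omega>. ennreal (exp (y r \<omega>)) \<partial>M) \<le> ennreal (exp (-2*k0*\<delta>\<^sup>2))" .
    qed (rule zero_le)
    also have "\<dots> = (\<Sum>r\<in>R'. ennreal (a r * exp (-2*k0*\<delta>\<^sup>2)))"
    proof (intro sum.cong refl)
      fix r assume "r \<in> R'"
      have "a r \<ge> 0" using Npos by (simp add: a_def)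
      then show "ennreal (a r) * ennreal (exp (-2*k0*\<delta>\<^sup>2)) = ennreal (a r * exp (-2*k0*\<delta>\<^sup>2))"
        by (subst ennreal_mult) auto
    qed
    also have "\<dots> = ennreal (\<Sum>r\<in>R'. a r * exp (-2*k0*\<delta>\<^sup>2))"
      by (rule sum_ennreal) (use Npos in \<open>simp add: a_def\<close>)
    also have "(\<Sum>r\<in>R'. a r * exp (-2*k0*\<delta>\<^sup>2)) = (\<Sum>r\<in>R'. a r) * exp (-2*k0*\<delta>\<^sup>2)"
      by (rule sum_distrib_right[symmetric])
    also have "(\<Sum>r\<in>R'. a r) = 1"
      using Npos by (simp add: a_def N_def flip: sum_divide_distrib)
    finally have "prob {\<omega>\<in>space M. 0 < S \<omega>} \<le> exp (-2*k0*\<delta>\<^sup>2)"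
      by (simp add: ennreal_le_iff)
    then show ?thesis by (simp add: sumS S_def)
  qed
qed



lemma pairs_identity:
  fixes x :: "nat \<Rightarrow> real"
  shows "(\<Sum>b<n. \<Sum>a<b. (x a - x b)\<^sup>2) = real n * (\<Sum>a<n. (x a)\<^sup>2) - (\<Sum>a<n. x a)\<^sup>2"
proof (induction n)
  case 0 then show ?case by simp
next
  case (Suc n)
  have "(\<Sum>a<n. (x a - x n)\<^sup>2) = (\<Sum>a<n. (x a)\<^sup>2) - 2 * x n * (\<Sum>a<n. x a) + real n * (x n)\<^sup>2"
    by (simp add: power2_diff sum.distrib sum_subtractf sum_distrib_left mult_ac)
  then show ?case using Suc by (simp add: power2_sum algebra_simps)
qed

lemma sumsq_dev:
  fixes y :: "nat \<Rightarrow> real" assumes "n > 0"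
  shows "(\<Sum>q<n. (y q - (\<Sum>p<n. y p) / real n)\<^sup>2) = (\<Sum>q<n. (y q)\<^sup>2) - (\<Sum>p<n. y p)\<^sup>2 / real n"
proof -
  define m where "m = (\<Sum>p<n. y p) / real n"
  have sm: "(\<Sum>p<n. y p) = real n * m" using assms by (simp add: m_def)
  have "(\<Sum>q<n. (y q - m)\<^sup>2) = (\<Sum>q<n. (y q)\<^sup>2) - 2 * m * (\<Sum>p<n. y p) + real n * m\<^sup>2"
    by (simp add: power2_diff sum.distrib sum_subtractf sum_distrib_left mult_ac)
  also have "\<dots> = (\<Sum>q<n. (y q)\<^sup>2) - (\<Sum>p<n. y p)\<^sup>2 / real n"
    using assms by (simp add: sm power2_eq_square field_simps)
  finally show ?thesis by (simp add: m_def)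
qed

lemma sv_pairs:
  assumes t: "t \<ge> 2"
  shows "sample_var t x = (\<Sum>b<t. \<Sum>a<b. (x (Suc a) - x (Suc b))\<^sup>2) / (real t * (real t - 1))"
proof -
  define y where "y = (\<lambda>k. x (Suc k))"
  have t0: "t > 0" "real t - 1 > 0" using t by auto
  have "sample_var t x = (1 / (real t - 1)) * (\<Sum>q<t. (y q - (\<Sum>p<t. y p) / real t)\<^sup>2)"
  proof -
    have e: "sum g {1..t} = (\<Sum>k<t. g (Suc k))" for g :: "nat \<Rightarrow> real"
      by (metis One_nat_def sum.atLeast1_atMost_eq)
    show ?thesis unfolding sample_var_def sample_mean_def e y_def ..
  qed
  also have "\<dots> = (real t * (\<Sum>a<t. (y a)\<^sup>2) - (\<Sum>a<t. y a)\<^sup>2) / (real t * (real t - 1))"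
    unfolding sumsq_dev[OF t0(1)] using t0 by (simp add: field_simps power2_eq_square)
  also have "\<dots> = (\<Sum>b<t. \<Sum>a<b. (x (Suc a) - x (Suc b))\<^sup>2) / (real t * (real t - 1))"
    using pairs_identity[of y t] by (simp add: y_def)
  finally show ?thesis .
qed



definition Mt :: "nat \<Rightarrow> nat \<Rightarrow> (nat \<times> nat) set" where
  "Mt t r = {(a,b). a < b \<and> b < t \<and> (a + b) mod t = r}"

lemma Mt_sub: "Mt t r \<subseteq> {..<t} \<times> {..<t}"
  by (auto simp: Mt_def)

lemma Mt_finite: "finite (Mt t r)"
  by (rule finite_subset[OF Mt_sub]) auto

lemma Mt_Union: "t > 0 \<Longrightarrow> \<Union>(Mt t ` {..<t}) = {(a,b). a < b \<and> b < t}"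
  by (auto simp: Mt_def)

lemma Mt_disj: "disjoint_family_on (Mt t) R"
  by (auto simp: disjoint_family_on_def Mt_def)

lemma mod_two_cases:
  fixes x t r :: nat
  assumes "x < 2 * t" "x mod t = r"
  shows "x = r \<or> x = r + t"
proof (cases "x < t")
  case True then show ?thesis using assms by simp
next
  case False
  then have "x mod t = (x - t) mod t" by (simp add: le_mod_geq)
  also have "\<dots> = x - t" using assms False by simp
  finally show ?thesis using assms False by simp
qed

lemma Mt_matching:
  assumes "(a,b) \<in> Mt t r" "(a',b') \<in> Mt t r" "(a,b) \<noteq> (a',b')"
  shows "a \<noteq> a' \<and> a \<noteq> b' \<and> b \<noteq> a' \<and> b \<noteq> b'"
proof -
  from assms have h: "a < b" "b < t" "a' < b'" "b' < t" "(a + b) mod t = r" "(a' + b') mod t = r"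
    by (auto simp: Mt_def)
  have e1: "a + b = r \<or> a + b = r + t" by (rule mod_two_cases) (use h in auto)
  have e2: "a' + b' = r \<or> a' + b' = r + t" by (rule mod_two_cases) (use h in auto)
  from e1 e2 h assms(3) show ?thesis by auto
qed

lemma Mt_card:
  assumes r: "r < t"
  shows "real t - 2 \<le> 2 * real (card (Mt t r))"
proof -
  define A1 where "A1 = (\<lambda>a. (a, r - a)) ` {..< (r+1) div 2}"
  define A2 where "A2 = (\<lambda>a. (a, r + t - a)) ` {Suc r..< (r+t+1) div 2}"
  have c1: "card A1 = (r+1) div 2" unfolding A1_def
    by (subst card_image) (auto simp: inj_on_def)
  have c2: "card A2 = (r+t+1) div 2 - Suc r" unfolding A2_def
    by (subst card_image) (auto simp: inj_on_def)
  have s1: "A1 \<subseteq> Mt t r"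
  proof
    fix p assume "p \<in> A1"
    then obtain a where p: "p = (a, r - a)" "a < (r+1) div 2" unfolding A1_def by auto
    then have "a < r - a" "a + (r - a) = r" by auto
    with p r show "p \<in> Mt t r" by (auto simp: Mt_def)
  qed
  have s2: "A2 \<subseteq> Mt t r"
  proof
    fix p assume "p \<in> A2"
    then obtain a where p: "p = (a, r + t - a)" "Suc r \<le> a" "a < (r+t+1) div 2" unfolding A2_def by auto
    then have "a < r + t - a" "r + t - a < t" "a + (r + t - a) = r + t" by auto
    with p r show "p \<in> Mt t r" by (auto simp: Mt_def)
  qed
  have d: "A1 \<inter> A2 = {}" unfolding A1_def A2_def by auto
  have fA: "finite A1" "finite A2" unfolding A1_def A2_def by auto
  have "card A1 + card A2 = card (A1 \<union> A2)" using d fA by (simp add: card_Un_disjoint)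
  also have "\<dots> \<le> card (Mt t r)" using s1 s2 by (intro card_mono Mt_finite) auto
  finally have le: "card A1 + card A2 \<le> card (Mt t r)" .
  have "t \<le> 2 + 2 * (card A1 + card A2)" unfolding c1 c2 using r by presburger
  with le have "t \<le> 2 + 2 * card (Mt t r)" by (meson le_trans add_left_mono mult_le_mono2)
  then show ?thesis by linarith
qed



lemma (in prob_space) int_bdd:
  fixes f :: "'a \<Rightarrow> real" and B :: real
  assumes "f \<in> borel_measurable M" "AE \<omega> in M. \<bar>f \<omega>\<bar> \<le> B"
  shows "integrable M f"
  using assms by (intro integrable_const_bound[where B=B]) auto

lemma sq_le1: "\<bar>x::real\<bar> \<le> 1 \<Longrightarrow> \<bar>x\<^sup>2\<bar> \<le> 1"
  by (simp add: abs_square_le_1)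

lemma (in prob_space) int_sq:
  fixes f :: "'a \<Rightarrow> real"
  assumes f[measurable]: "f \<in> borel_measurable M" and b: "AE \<omega> in M. \<bar>f \<omega>\<bar> \<le> 1"
  shows "integrable M (\<lambda>\<omega>. (f \<omega>)\<^sup>2)"
proof (rule int_bdd[where B=1])
  show "AE \<omega> in M. \<bar>(f \<omega>)\<^sup>2\<bar> \<le> 1" using b by (auto elim!: eventually_mono simp: abs_square_le_1)
qed measurable

lemma (in prob_space) var_expand:
  fixes f :: "'a \<Rightarrow> real"
  assumes f[measurable]: "f \<in> borel_measurable M" and b: "AE \<omega> in M. \<bar>f \<omega>\<bar> \<le> 1"
  shows "expectation (\<lambda>\<omega>. (f \<omega> - c)\<^sup>2) = expectation (\<lambda>\<omega>. (f \<omega>)\<^sup>2) - 2 * c * expectation f + c\<^sup>2"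
proof -
  have i1: "integrable M f" by (rule int_bdd[OF f b])
  have i2: "integrable M (\<lambda>\<omega>. (f \<omega>)\<^sup>2)"
    by (rule int_sq[OF f b])
  have "(\<lambda>\<omega>. (f \<omega> - c)\<^sup>2) = (\<lambda>\<omega>. ((f \<omega>)\<^sup>2 - 2 * c * f \<omega>) + c\<^sup>2)"
    by (auto simp: power2_diff)
  then have "expectation (\<lambda>\<omega>. (f \<omega> - c)\<^sup>2) = expectation (\<lambda>\<omega>. ((f \<omega>)\<^sup>2 - 2 * c * f \<omega>) + c\<^sup>2)"
    by simp
  also have "\<dots> = expectation (\<lambda>\<omega>. (f \<omega>)\<^sup>2 - 2 * c * f \<omega>) + c\<^sup>2"
    using i1 i2 by (subst Bochner_Integration.integral_add) (auto simp: prob_space)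
  also have "expectation (\<lambda>\<omega>. (f \<omega>)\<^sup>2 - 2 * c * f \<omega>) = expectation (\<lambda>\<omega>. (f \<omega>)\<^sup>2) - 2 * c * expectation f"
    using i1 i2 by (subst Bochner_Integration.integral_diff) auto
  finally show ?thesis .
qed

lemma (in prob_space) sq_diff_exp:
  fixes Y :: "'i \<Rightarrow> 'a \<Rightarrow> real"
  assumes ind: "indep_vars (\<lambda>_. borel) Y {p1, p2}" and p: "p1 \<noteq> p2"
    and b1: "AE \<omega> in M. \<bar>Y p1 \<omega>\<bar> \<le> 1" and b2: "AE \<omega> in M. \<bar>Y p2 \<omega>\<bar> \<le> 1"
  shows "expectation (\<lambda>\<omega>. (Y p1 \<omega> - Y p2 \<omega>)\<^sup>2) =
     expectation (\<lambda>\<omega>. (Y p1 \<omega>)\<^sup>2) - 2 * expectation (Y p1) * expectation (Y p2) + expectation (\<lambda>\<omega>. (Y p2 \<omega>)\<^sup>2)"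
proof -
  have m1[measurable]: "Y p1 \<in> borel_measurable M" and m2[measurable]: "Y p2 \<in> borel_measurable M"
    using ind unfolding indep_vars_def by auto
  have i1: "integrable M (Y p1)" by (rule int_bdd[OF m1 b1])
  have i2: "integrable M (Y p2)" by (rule int_bdd[OF m2 b2])
  have s1: "integrable M (\<lambda>\<omega>. (Y p1 \<omega>)\<^sup>2)" by (rule int_sq[OF m1 b1])
  have s2: "integrable M (\<lambda>\<omega>. (Y p2 \<omega>)\<^sup>2)" by (rule int_sq[OF m2 b2])
  have prodI: "(\<integral>\<omega>. (\<Prod>p\<in>{p1,p2}. Y p \<omega>) \<partial>M) = (\<Prod>p\<in>{p1,p2}. \<integral>\<omega>. Y p \<omega> \<partial>M)"
    by (rule indep_vars_lebesgue_integral) (use ind i1 i2 in auto)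
  have i12: "integrable M (\<lambda>\<omega>. (\<Prod>p\<in>{p1,p2}. Y p \<omega>))"
    by (rule indep_vars_integrable) (use ind i1 i2 in auto)
  have e12: "expectation (\<lambda>\<omega>. Y p1 \<omega> * Y p2 \<omega>) = expectation (Y p1) * expectation (Y p2)"
    using prodI p by simp
  have i12': "integrable M (\<lambda>\<omega>. Y p1 \<omega> * Y p2 \<omega>)" using i12 p by simp
  have "(\<lambda>\<omega>. (Y p1 \<omega> - Y p2 \<omega>)\<^sup>2) = (\<lambda>\<omega>. ((Y p1 \<omega>)\<^sup>2 - 2 * (Y p1 \<omega> * Y p2 \<omega>)) + (Y p2 \<omega>)\<^sup>2)"
    by (auto simp: power2_diff)
  then have "expectation (\<lambda>\<omega>. (Y p1 \<omega> - Y p2 \<omega>)\<^sup>2) = expectation (\<lambda>\<omega>. ((Y p1 \<omega>)\<^sup>2 - 2 * (Y p1 \<omega> * Y p2 \<omega>)) + (Y p2 \<omega>)\<^sup>2)"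
    by simp
  also have "\<dots> = expectation (\<lambda>\<omega>. (Y p1 \<omega>)\<^sup>2 - 2 * (Y p1 \<omega> * Y p2 \<omega>)) + expectation (\<lambda>\<omega>. (Y p2 \<omega>)\<^sup>2)"
    using s1 s2 i12' by (subst Bochner_Integration.integral_add) auto
  also have "expectation (\<lambda>\<omega>. (Y p1 \<omega>)\<^sup>2 - 2 * (Y p1 \<omega> * Y p2 \<omega>)) = expectation (\<lambda>\<omega>. (Y p1 \<omega>)\<^sup>2) - 2 * expectation (\<lambda>\<omega>. Y p1 \<omega> * Y p2 \<omega>)"
    using s1 i12' by (subst Bochner_Integration.integral_diff) auto
  finally show ?thesis using e12 by simp
qed

lemma pair_sum:
  fixes f :: "nat \<times> nat \<Rightarrow> real"
  shows "(\<Sum>e\<in>{(a,b). a < b \<and> b < t}. f e) = (\<Sum>b<t. \<Sum>a<b. f (a,b))"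
proof -
  have "{(a,b). a < b \<and> b < t} = (\<lambda>(b,a). (a,b)) ` (SIGMA b:{..<t}. {..<b})"
    by (auto simp: image_iff)
  moreover have "inj_on (\<lambda>(b,a). (a::nat,b::nat)) (SIGMA b:{..<t}. {..<b})"
    by (auto simp: inj_on_def)
  ultimately have "(\<Sum>e\<in>{(a,b). a < b \<and> b < t}. f e) = (\<Sum>p\<in>(SIGMA b:{..<t}. {..<b}). f ((\<lambda>(b,a). (a,b)) p))"
    by (simp add: sum.reindex)
  also have "\<dots> = (\<Sum>b<t. \<Sum>a<b. f (a,b))"
    by (subst sum.Sigma) (auto intro!: sum.cong)
  finally show ?thesis .
qed

lemma half_diff_bound:
  fixes A B g :: real
  assumes "0 \<le> A \<and> A \<le> 1" "0 \<le> B \<and> B \<le> 1" "g = (A - B) / 2"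
  shows "- 1 / 2 \<le> g \<and> g \<le> 1 / 2"
proof -
  have "- 1 / 2 \<le> g" using assms by auto
  moreover have "g \<le> 1 / 2" using assms by auto
  ultimately show ?thesis by blast
qed

lemma div_less_pos:
  fixes a b c :: real
  assumes "c > 0"
  shows "a / c < b / c \<longleftrightarrow> a < b"
  using assms by (simp add: divide_less_cancel)

theorem lemma3:
  fixes M :: "'a measure" and K :: nat
    and D :: "nat \<Rightarrow> real measure"
    and X :: "nat \<Rightarrow> nat \<Rightarrow> 'a \<Rightarrow> real"
    and s i t :: nat
  assumes "prob_space M"
    and D_prob: "\<And>j. j < K \<Longrightarrow> prob_space (D j)"
    and D_sets: "\<And>j. j < K \<Longrightarrow> sets (D j) = sets borel"
    and D_supp: "\<And>j. j < K \<Longrightarrow> (AE x in D j. 0 \<le> x \<and> x \<le> 1)"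
    and X_meas: "\<And>j q. j < K \<Longrightarrow> X j q \<in> borel_measurable M"
    and X_distr: "\<And>j q. j < K \<Longrightarrow> distr M borel (X j q) = D j"
    and X_indep: "prob_space.indep_vars M (\<lambda>_. borel) (\<lambda>(j, q). X j q) ({..<K} \<times> UNIV)"
    and s_arm: "s < K"
    and s_best: "\<And>j. j < K \<Longrightarrow> j \<noteq> s \<Longrightarrow> dist_var (D j) < dist_var (D s)"
    and i_arm: "i < K"
    and t_pos: "t \<ge> 1"
  shows "measure M {\<omega> \<in> space M. sample_var t (\<lambda>q. X i q \<omega>) > sample_var t (\<lambda>q. X s q \<omega>)}
           \<le> exp (- ((real t - 1)\<^sup>2 * (dist_var (D s) - dist_var (D i))\<^sup>2) / (2 * real t))"
proof -
  interpret P: prob_space M by fact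
  define \<delta> where "\<delta> = dist_var (D s) - dist_var (D i)"
  show ?thesis
  proof (cases "i = s \<or> t = 1")
    case True
    then have E: "{\<omega> \<in> space M. sample_var t (\<lambda>q. X i q \<omega>) > sample_var t (\<lambda>q. X s q \<omega>)} = {}"
      by (auto simp: sample_var_def)
    show ?thesis unfolding E by simp
  next
    case False
    then have nis: "i \<noteq> s" and t2: "t \<ge> 2" using t_pos by auto
    have dpos: "\<delta> > 0" using s_best[OF i_arm nis] by (simp add: \<delta>_def)
    have bnd: "AE \<omega> in M. 0 \<le> X j q \<omega> \<and> X j q \<omega> \<le> 1" if "j < K" for j q
    proof -
      have "AE x in distr M borel (X j q). 0 \<le> x \<and> x \<le> 1" using D_supp[OF that] by (simp only: X_distr[OF that])
      then show ?thesis using X_meas[OF that] by (subst (asm) AE_distr_iff) auto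
    qed
    have babs: "AE \<omega> in M. \<bar>X j q \<omega>\<bar> \<le> 1" if "j < K" for j q
      using bnd[OF that, of q] by eventually_elim auto
    have mom1: "P.expectation (X j q) = (\<integral>x. x \<partial>D j)" if "j < K" for j q
      using integral_distr[OF X_meas[OF that, of q], of "\<lambda>x. x"] X_distr[OF that, of q] by simp
    have var: "dist_var (D j) = P.expectation (\<lambda>\<omega>. (X j q \<omega>)\<^sup>2) - (P.expectation (X j q))\<^sup>2" if "j < K" for j q
    proof -
      define m where "m = (\<integral>x. x \<partial>D j)"
      have "dist_var (D j) = (\<integral>x. (x - m)\<^sup>2 \<partial>D j)" by (simp add: dist_var_def m_def)
      also have "\<dots> = P.expectation (\<lambda>\<omega>. (X j q \<omega> - m)\<^sup>2)"
        using integral_distr[OF X_meas[OF that, of q], of "\<lambda>x. (x - m)\<^sup>2"] X_distr[OF that, of q] by simp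
      also have "\<dots> = P.expectation (\<lambda>\<omega>. (X j q \<omega>)\<^sup>2) - 2 * m * P.expectation (X j q) + m\<^sup>2"
        by (rule P.var_expand[OF X_meas[OF that] babs[OF that]])
      finally show ?thesis using mom1[OF that, of q] by (simp add: m_def power2_eq_square)
    qed
    have sqd: "P.expectation (\<lambda>\<omega>. (X j a \<omega> - X j b \<omega>)\<^sup>2) = 2 * dist_var (D j)" if "j < K" "a \<noteq> b" for j a b
    proof -
      have ind2: "P.indep_vars (\<lambda>_. borel) (\<lambda>(j, q). X j q) {(j,a),(j,b)}"
        by (rule P.indep_vars_subset[OF X_indep]) (use that in auto)
      have "P.expectation (\<lambda>\<omega>. ((\<lambda>(j, q). X j q) (j,a) \<omega> - (\<lambda>(j, q). X j q) (j,b) \<omega>)\<^sup>2) =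
         P.expectation (\<lambda>\<omega>. ((\<lambda>(j, q). X j q) (j,a) \<omega>)\<^sup>2) - 2 * P.expectation ((\<lambda>(j, q). X j q) (j,a)) * P.expectation ((\<lambda>(j, q). X j q) (j,b)) + P.expectation (\<lambda>\<omega>. ((\<lambda>(j, q). X j q) (j,b) \<omega>)\<^sup>2)"
        by (rule P.sq_diff_exp[OF ind2]) (use that babs in auto)
      then have "P.expectation (\<lambda>\<omega>. (X j a \<omega> - X j b \<omega>)\<^sup>2) =
         P.expectation (\<lambda>\<omega>. (X j a \<omega>)\<^sup>2) - 2 * P.expectation (X j a) * P.expectation (X j b) + P.expectation (\<lambda>\<omega>. (X j b \<omega>)\<^sup>2)"
        by simp
      then show ?thesis using var[OF that(1), of a] var[OF that(1), of b] mom1[OF that(1), of a] mom1[OF that(1), of b]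
        by (simp add: power2_eq_square)
    qed
    define G where "G = (\<lambda>(e::nat\<times>nat) \<omega>. ((X i (Suc (fst e)) \<omega> - X i (Suc (snd e)) \<omega>)\<^sup>2 - (X s (Suc (fst e)) \<omega> - X s (Suc (snd e)) \<omega>)\<^sup>2) / 2)"
    have dabs: "AE \<omega> in M. \<bar>X j a \<omega> - X j b \<omega>\<bar> \<le> 1" if "j < K" for j a b
      using bnd[OF that, of a] bnd[OF that, of b] by eventually_elim auto
    have EG: "P.expectation (G e) = -\<delta>" if "fst e < snd e" for e
    proof -
      have i1: "integrable M (\<lambda>\<omega>. (X i (Suc (fst e)) \<omega> - X i (Suc (snd e)) \<omega>)\<^sup>2)"
        by (rule P.int_sq[OF _ dabs[OF i_arm]]) (use X_meas[OF i_arm] in measurable)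
      have i2: "integrable M (\<lambda>\<omega>. (X s (Suc (fst e)) \<omega> - X s (Suc (snd e)) \<omega>)\<^sup>2)"
        by (rule P.int_sq[OF _ dabs[OF s_arm]]) (use X_meas[OF s_arm] in measurable)
      have "P.expectation (G e) = (P.expectation (\<lambda>\<omega>. (X i (Suc (fst e)) \<omega> - X i (Suc (snd e)) \<omega>)\<^sup>2)
           - P.expectation (\<lambda>\<omega>. (X s (Suc (fst e)) \<omega> - X s (Suc (snd e)) \<omega>)\<^sup>2)) / 2"
        unfolding G_def using i1 i2 by (simp add: case_prod_beta)
      also have "\<dots> = -\<delta>" using that sqd[OF i_arm, of "Suc (fst e)" "Suc (snd e)"] sqd[OF s_arm, of "Suc (fst e)" "Suc (snd e)"]
        by (simp add: \<delta>_def)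
      finally show ?thesis .
    qed
    have GB: "AE \<omega> in M. G e \<omega> \<in> {-1/2..1/2}" for e
    proof -
      have "AE \<omega> in M. (0 \<le> X i (Suc (fst e)) \<omega> \<and> X i (Suc (fst e)) \<omega> \<le> 1) \<and> (0 \<le> X i (Suc (snd e)) \<omega> \<and> X i (Suc (snd e)) \<omega> \<le> 1)
          \<and> (0 \<le> X s (Suc (fst e)) \<omega> \<and> X s (Suc (fst e)) \<omega> \<le> 1) \<and> (0 \<le> X s (Suc (snd e)) \<omega> \<and> X s (Suc (snd e)) \<omega> \<le> 1)"
        using bnd[OF i_arm] bnd[OF s_arm] by (intro AE_conjI) auto
      then show ?thesis
      proof (rule eventually_mono)
        fix \<omega>
        assume h: "(0 \<le> X i (Suc (fst e)) \<omega> \<and> X i (Suc (fst e)) \<omega> \<le> 1) \<and> (0 \<le> X i (Suc (snd e)) \<omega> \<and> X i (Suc (snd e)) \<omega> \<le> 1)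
          \<and> (0 \<le> X s (Suc (fst e)) \<omega> \<and> X s (Suc (fst e)) \<omega> \<le> 1) \<and> (0 \<le> X s (Suc (snd e)) \<omega> \<and> X s (Suc (snd e)) \<omega> \<le> 1)"
        have sq01: "0 \<le> (u - v)\<^sup>2 \<and> (u - v)\<^sup>2 \<le> 1" if "0 \<le> u" "u \<le> 1" "0 \<le> v" "v \<le> 1" for u v :: real
        proof -
          have "\<bar>u - v\<bar> \<le> 1" using that by auto
          then show ?thesis by (simp add: abs_square_le_1)
        qed
        have a1: "0 \<le> (X i (Suc (fst e)) \<omega> - X i (Suc (snd e)) \<omega>)\<^sup>2 \<and> (X i (Suc (fst e)) \<omega> - X i (Suc (snd e)) \<omega>)\<^sup>2 \<le> 1"
          using h by (intro sq01) auto
        have a2: "0 \<le> (X s (Suc (fst e)) \<omega> - X s (Suc (snd e)) \<omega>)\<^sup>2 \<and> (X s (Suc (fst e)) \<omega> - X s (Suc (snd e)) \<omega>)\<^sup>2 \<le> 1"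
          using h by (intro sq01) auto
        have ge: "G e \<omega> = ((X i (Suc (fst e)) \<omega> - X i (Suc (snd e)) \<omega>)\<^sup>2 - (X s (Suc (fst e)) \<omega> - X s (Suc (snd e)) \<omega>)\<^sup>2) / 2"
          by (simp add: G_def case_prod_beta)
        show "G e \<omega> \<in> {-1/2..1/2}" unfolding atLeastAtMost_iff by (rule half_diff_bound[OF a1 a2 ge])
      qed
    qed
    have indG: "P.indep_vars (\<lambda>_. borel) G (Mt t r)" for r
    proof -
      define KK where "KK = (\<lambda>e::nat\<times>nat. {i,s} \<times> {Suc (fst e), Suc (snd e)})"
      have r1: "P.indep_vars (\<lambda>e. PiM (KK e) (\<lambda>_. borel)) (\<lambda>e \<omega>. restrict (\<lambda>p. (\<lambda>(j, q). X j q) p \<omega>) (KK e)) (Mt t r)"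
      proof (rule P.indep_vars_restrict[OF X_indep])
        show "KK e \<subseteq> {..<K} \<times> UNIV" if "e \<in> Mt t r" for e using i_arm s_arm by (auto simp: KK_def)
        show "disjoint_family_on KK (Mt t r)"
          unfolding disjoint_family_on_def
        proof (intro ballI impI)
          fix e e' assume "e \<in> Mt t r" "e' \<in> Mt t r" "e \<noteq> e'"
          then have "fst e \<noteq> fst e' \<and> fst e \<noteq> snd e' \<and> snd e \<noteq> fst e' \<and> snd e \<noteq> snd e'"
            using Mt_matching[of "fst e" "snd e" t r "fst e'" "snd e'"] by auto
          then show "KK e \<inter> KK e' = {}" by (auto simp: KK_def)
        qed
      qed
      define Yf where "Yf = (\<lambda>(e::nat\<times>nat) (f::nat\<times>nat\<Rightarrow>real). ((f (i, Suc (fst e)) - f (i, Suc (snd e)))\<^sup>2 - (f (s, Suc (fst e)) - f (s, Suc (snd e)))\<^sup>2) / 2)"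
      have r2: "P.indep_vars (\<lambda>_. borel) (\<lambda>e \<omega>. Yf e (restrict (\<lambda>p. (\<lambda>(j, q). X j q) p \<omega>) (KK e))) (Mt t r)"
      proof (rule P.indep_vars_compose2[OF r1])
        fix e assume "e \<in> Mt t r"
        have k1: "(i, Suc (fst e)) \<in> KK e" "(i, Suc (snd e)) \<in> KK e" "(s, Suc (fst e)) \<in> KK e" "(s, Suc (snd e)) \<in> KK e"
          by (auto simp: KK_def)
        show "Yf e \<in> borel_measurable (PiM (KK e) (\<lambda>_. borel))"
          unfolding Yf_def using k1 by measurable
      qed
      show ?thesis
        by (rule P.indep_vars_cong[THEN iffD1, OF refl _ refl r2]) (auto simp: Yf_def G_def KK_def fun_eq_iff)
    qed
    define k0 where "k0 = max 1 ((real t - 2) / 2)"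
    have k0pos: "k0 > 0" by (simp add: k0_def)
    have card_ok: "real (card (Mt t r)) \<ge> k0" if "r \<in> {..<t}" "Mt t r \<noteq> {}" for r
    proof -
      have "card (Mt t r) \<ge> 1" using that Mt_finite[of t r] by (simp add: Suc_le_eq card_gt_0_iff)
      moreover have "real t - 2 \<le> 2 * real (card (Mt t r))" using that by (intro Mt_card) auto
      ultimately show ?thesis by (simp add: k0_def)
    qed
    have tail: "P.prob {\<omega>\<in>space M. 0 < (\<Sum>e\<in>\<Union>(Mt t ` {..<t}). G e \<omega>)} \<le> exp (-2*k0*\<delta>\<^sup>2)"
    proof (rule P.matchings_tail[where G=G and Mt="Mt t" and R="{..<t}"])
      show "\<And>r e. r \<in> {..<t} \<Longrightarrow> e \<in> Mt t r \<Longrightarrow> P.expectation (G e) = - \<delta>"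
        by (rule EG) (auto simp: Mt_def)
    qed (use Mt_finite Mt_disj indG GB dpos k0pos card_ok in auto)
    have ev: "{\<omega> \<in> space M. sample_var t (\<lambda>q. X i q \<omega>) > sample_var t (\<lambda>q. X s q \<omega>)}
        = {\<omega>\<in>space M. 0 < (\<Sum>e\<in>\<Union>(Mt t ` {..<t}). G e \<omega>)}"
    proof -
      have c: "real t * (real t - 1) > 0" using t2 by simp
      have "sample_var t (\<lambda>q. X i q \<omega>) > sample_var t (\<lambda>q. X s q \<omega>) \<longleftrightarrow> 0 < (\<Sum>e\<in>\<Union>(Mt t ` {..<t}). G e \<omega>)" for \<omega>
      proof -
        have "(\<Sum>e\<in>\<Union>(Mt t ` {..<t}). G e \<omega>) = (\<Sum>b<t. \<Sum>a<b. G (a,b) \<omega>)"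
          using t2 by (simp add: Mt_Union pair_sum)
        also have "\<dots> = ((\<Sum>b<t. \<Sum>a<b. (X i (Suc a) \<omega> - X i (Suc b) \<omega>)\<^sup>2) - (\<Sum>b<t. \<Sum>a<b. (X s (Suc a) \<omega> - X s (Suc b) \<omega>)\<^sup>2)) / 2"
          by (simp add: G_def sum_subtractf flip: sum_divide_distrib)
        finally have Seq: "(\<Sum>e\<in>\<Union>(Mt t ` {..<t}). G e \<omega>) = ((\<Sum>b<t. \<Sum>a<b. (X i (Suc a) \<omega> - X i (Suc b) \<omega>)\<^sup>2) - (\<Sum>b<t. \<Sum>a<b. (X s (Suc a) \<omega> - X s (Suc b) \<omega>)\<^sup>2)) / 2" .
        show ?thesis unfolding sv_pairs[OF t2] div_less_pos[OF c] Seq by auto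
      qed
      then show ?thesis by auto
    qed
    have fin: "exp (-2*k0*\<delta>\<^sup>2) \<le> exp (- ((real t - 1)\<^sup>2 * \<delta>\<^sup>2) / (2 * real t))"
    proof -
      have "(real t - 1)\<^sup>2 \<le> 4 * real t * k0"
      proof (cases "t \<le> 3")
        case True
        then have "(real t - 5) * (real t - 1) \<le> 0" using t2 by (intro mult_nonpos_nonneg) auto
        moreover have "1 \<le> k0" by (simp add: k0_def)
        then have "4 * real t * 1 \<le> 4 * real t * k0" by (intro mult_left_mono) auto
        moreover have "(real t - 1)\<^sup>2 = (real t - 5) * (real t - 1) + 4 * real t - 4"
          by (simp add: algebra_simps power2_eq_square)
        ultimately show ?thesis by linarith
      next
        case False
        then have "(real t - 3) * (real t + 1) \<ge> 0" by (intro mult_nonneg_nonneg) auto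
        moreover have "(real t - 2) / 2 \<le> k0" by (simp add: k0_def)
        then have "4 * real t * ((real t - 2) / 2) \<le> 4 * real t * k0" by (intro mult_left_mono) auto
        moreover have "4 * real t * ((real t - 2) / 2) = (real t - 1)\<^sup>2 + (real t - 3) * (real t + 1) + 2"
          by (simp add: field_simps power2_eq_square)
        ultimately show ?thesis by linarith
      qed
      then have "(real t - 1)\<^sup>2 * \<delta>\<^sup>2 \<le> (4 * real t * k0) * \<delta>\<^sup>2" by (intro mult_right_mono) auto
      then have "((real t - 1)\<^sup>2 * \<delta>\<^sup>2) / (2 * real t) \<le> 2 * k0 * \<delta>\<^sup>2" using t2 by (simp add: field_simps)
      then show ?thesis by simp
    qed
    show ?thesis unfolding ev \<delta>_def[symmetric] by (rule order_trans[OF tail fin])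
  qed
qed

end
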